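(* If a presheaf $P\colon\mathbb{O}\to\mathbf{Set}$ preserves pullbacks, then so do $\mathcal{P}_f P$, $\Delta P$ and $BP$. That is, $\mathcal{P}_f$, $\Delta$ and $B$ restrict to endofunctors on the full subcategory of $\mathbf{Set}^{\mathbb{O}}$ formed by pullback-preserving presheaves.
   Context: Fix a finite set $Act$ of action labels. An $Act$-labelled poset is $O=(X_O,\preccurlyeq_O,l_O)$ with partial order $\preccurlyeq_O$ and $l_O\colon X_O\to Act$; $|O|=\{(x,l_O(x))\}$. Morphisms preserve order and labels; order-embeddings also reflect order. $\mathbb{O}$ is the category whose objects are chosen representatives of the isomorphism classes of finite $Act$-labelled posets and whose morphisms are order-embeddings. $\boldsymbol{\delta}\colon\mathbb{O}\to\mathbb{O}$: $\boldsymbol{\delta}(O)$ is (the representative of) the poset obtained from $O$ by adding, for each antichain $K\subseteq|O|$ (including $\emptyset$) and each $a\in Act$, a fresh event $new(O,K,a)$ labelled $a$ above exactly the elements of $K$ (reflexive-transitively closed); for an order-embedding $\sigma\colon O\to O'$, $\boldsymbol{\delta}(\sigma)$ acts as $\sigma$ on old events and sends $new(O,K,a)$ to $new(O',\sigma(K),a)$. $\mathbf{Set}^{\mathbb{O}}$: functors $\mathbb{O}\to\mathbf{Set}$. $\mathcal{E}(O)=|O|$, with renaming on morphisms. $\mathcal{P}_f$: pointwise finite powerset (direct images). $\Delta P=P\circ\boldsymbol{\delta}$. $\mathcal{L}(O)=Act\times\mathcal{P}_f(\mathcal{E}(O))$. $BP=\mathcal{P}_f(\mathcal{L}\times\Delta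 P)$, products pointwise. *)

theory Defs
  imports "HOL-Library.FuncSet"
begin

text \<open>An Act-labelled poset with events of type 'e; Act is the (finite) type 'a.\<close>
record ('e, 'a) lposet =
  lcarrier :: "'e set"
  lle :: "'e \<Rightarrow> 'e \<Rightarrow> bool"
  llab :: "'e \<Rightarrow> 'a"

definition lposet :: "('e, 'a) lposet \<Rightarrow> bool" where
  "lposet X \<longleftrightarrow> finite (lcarrier X)
     \<and> (\<forall>x\<in>lcarrier X. lle X x x)
     \<and> (\<forall>x\<in>lcarrier X. \<forall>y\<in>lcarrier X. lle X x y \<and> lle X y x \<longrightarrow> x = y)
     \<and> (\<forall>x\<in>lcarrier X. \<forall>y\<in>lcarrier X. \<forall>z\<in>lcarrier X.
          lle X x y \<and> lle X y z \<longrightarrow> lle X x z)"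

definition order_emb :: "('e, 'a) lposet \<Rightarrow> ('f, 'a) lposet \<Rightarrow> ('e \<Rightarrow> 'f) \<Rightarrow> bool" where
  "order_emb X Y f \<longleftrightarrow> f \<in> lcarrier X \<rightarrow> lcarrier Y
     \<and> (\<forall>x\<in>lcarrier X. llab Y (f x) = llab X x)
     \<and> (\<forall>x\<in>lcarrier X. \<forall>y\<in>lcarrier X. lle Y (f x) (f y) \<longleftrightarrow> lle X x y)"

definition lpo_iso :: "('e, 'a) lposet \<Rightarrow> ('f, 'a) lposet \<Rightarrow> bool" where
  "lpo_iso X Y \<longleftrightarrow> (\<exists>f. bij_betw f (lcarrier X) (lcarrier Y) \<and> order_emb X Y f)"

text \<open>Representatives live on carriers of type nat.  The chosen representative
  of a finite labelled poset depends only on its isomorphism class.\<close>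
definition rep :: "('e, 'a) lposet \<Rightarrow> (nat, 'a) lposet" where
  "rep X = (SOME Y. lposet Y \<and> lpo_iso Y X)"

definition obs :: "(nat, 'a) lposet set" where
  "obs = {X. lposet X \<and> rep X = X}"

definition hom :: "(nat, 'a) lposet \<Rightarrow> (nat, 'a) lposet \<Rightarrow> (nat \<Rightarrow> nat) set" where
  "hom X Y = {f. order_emb X Y f \<and> f \<in> extensional (lcarrier X)}"

definition idm :: "(nat, 'a) lposet \<Rightarrow> nat \<Rightarrow> nat" where
  "idm X = restrict id (lcarrier X)"

definition comp :: "(nat, 'a) lposet \<Rightarrow> (nat \<Rightarrow> nat) \<Rightarrow> (nat \<Rightarrow> nat) \<Rightarrow> nat \<Rightarrow> nat" where
  "comp X g f = compose (lcarrier X) g f"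

text \<open>Pullback squares in \<open>\<X>\<close>:  D --p--> B --f--> A  and  D --q--> C --g--> A.\<close>
definition is_pullback ::
  "(nat, 'a) lposet \<Rightarrow> (nat, 'a) lposet \<Rightarrow> (nat, 'a) lposet \<Rightarrow> (nat, 'a) lposet \<Rightarrow>
   (nat \<Rightarrow> nat) \<Rightarrow> (nat \<Rightarrow> nat) \<Rightarrow> (nat \<Rightarrow> nat) \<Rightarrow> (nat \<Rightarrow> nat) \<Rightarrow> bool" where
  "is_pullback A B C D f g p q \<longleftrightarrow>
     A \<in> obs \<and> B \<in> obs \<and> C \<in> obs \<and> D \<in> obs \<and>
     f \<in> hom B A \<and> g \<in> hom C A \<and> p \<in> hom D B \<and> q \<in> hom D C \<and>
     comp D f p = comp D g q \<and>
     (\<forall>E\<in>obs. \<forall>u\<in>hom E B. \<forall>v\<in>hom E C. comp E f u = comp E g v \<longrightarrow>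
        (\<exists>!h. h \<in> hom E D \<and> comp E p h = u \<and> comp E q h = v))"

definition antichain :: "('e, 'a) lposet \<Rightarrow> 'e set \<Rightarrow> bool" where
  "antichain X K \<longleftrightarrow> (\<forall>x\<in>K. \<forall>y\<in>K. lle X x y \<longrightarrow> x = y)"

text \<open>Raw construction: old events are Inl x, the fresh event new(X,K,a) is Inr (K,a).\<close>
fun draw_le :: "('e, 'a) lposet \<Rightarrow> 'e + ('e set \<times> 'a) \<Rightarrow> 'e + ('e set \<times> 'a) \<Rightarrow> bool" where
  "draw_le X (Inl x) (Inl y) = lle X x y"
| "draw_le X (Inl x) (Inr (K, a)) = (\<exists>k\<in>K. lle X x k)"
| "draw_le X (Inr (K, a)) (Inr (K', a')) = ((K, a) = (K', a'))"
| "draw_le X (Inr _) (Inl _) = False"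

fun draw_lab :: "('e, 'a) lposet \<Rightarrow> 'e + ('e set \<times> 'a) \<Rightarrow> 'a" where
  "draw_lab X (Inl x) = llab X x"
| "draw_lab X (Inr (K, a)) = a"

definition draw :: "('e, 'a) lposet \<Rightarrow> ('e + ('e set \<times> 'a), 'a) lposet" where
  "draw X = \<lparr> lcarrier = Inl ` lcarrier X \<union>
                 {Inr (K, a) | K a. K \<subseteq> lcarrier X \<and> antichain X K},
              lle = draw_le X, llab = draw_lab X \<rparr>"

fun draw_map :: "('e \<Rightarrow> 'f) \<Rightarrow> 'e + ('e set \<times> 'a) \<Rightarrow> 'f + ('f set \<times> 'a)" where
  "draw_map s (Inl x) = Inl (s x)"
| "draw_map s (Inr (K, a)) = Inr (s ` K, a)"

definition delta :: "(nat, 'a) lposet \<Rightarrow> (nat, 'a) lposet" where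
  "delta X = rep (draw X)"

definition delta_iso :: "(nat, 'a) lposet \<Rightarrow> nat + (nat set \<times> 'a) \<Rightarrow> nat" where
  "delta_iso X = (SOME f. bij_betw f (lcarrier (draw X)) (lcarrier (delta X))
                          \<and> order_emb (draw X) (delta X) f)"

definition delta_mor :: "(nat, 'a) lposet \<Rightarrow> (nat, 'a) lposet \<Rightarrow> (nat \<Rightarrow> nat) \<Rightarrow> nat \<Rightarrow> nat" where
  "delta_mor X Y s = restrict
     (\<lambda>y. delta_iso Y (draw_map s (inv_into (lcarrier (draw X)) (delta_iso X) y)))
     (lcarrier (delta X))"

record ('a, 'x) psh =
  pobj :: "(nat, 'a) lposet \<Rightarrow> 'x set"
  pmor :: "(nat, 'a) lposet \<Rightarrow> (nat, 'a) lposet \<Rightarrow> (nat \<Rightarrow> nat) \<Rightarrow> 'x \<Rightarrow> 'x"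

definition is_functor :: "('a, 'x) psh \<Rightarrow> bool" where
  "is_functor F \<longleftrightarrow>
     (\<forall>X\<in>obs. \<forall>Y\<in>obs. \<forall>s\<in>hom X Y. \<forall>x\<in>pobj F X. pmor F X Y s x \<in> pobj F Y) \<and>
     (\<forall>X\<in>obs. \<forall>x\<in>pobj F X. pmor F X X (idm X) x = x) \<and>
     (\<forall>X\<in>obs. \<forall>Y\<in>obs. \<forall>Z\<in>obs. \<forall>s\<in>hom X Y. \<forall>t\<in>hom Y Z. \<forall>x\<in>pobj F X.
        pmor F X Z (comp X t s) x = pmor F Y Z t (pmor F X Y s x))"

definition set_pullback ::
  "'x set \<Rightarrow> 'x set \<Rightarrow> 'x set \<Rightarrow> 'x set \<Rightarrow>
   ('x \<Rightarrow> 'x) \<Rightarrow> ('x \<Rightarrow> 'x) \<Rightarrow> ('x \<Rightarrow> 'x) \<Rightarrow> ('x \<Rightarrow> 'x) \<Rightarrow> bool" where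
  "set_pullback XA XB XC XD f g p q \<longleftrightarrow>
     (\<forall>d\<in>XD. f (p d) = g (q d)) \<and>
     (\<forall>b\<in>XB. \<forall>c\<in>XC. f b = g c \<longrightarrow> (\<exists>!d. d \<in> XD \<and> p d = b \<and> q d = c))"

definition preserves_pullbacks :: "('a, 'x) psh \<Rightarrow> bool" where
  "preserves_pullbacks F \<longleftrightarrow>
     (\<forall>A B C D f g p q. is_pullback A B C D f g p q \<longrightarrow>
        set_pullback (pobj F A) (pobj F B) (pobj F C) (pobj F D)
          (pmor F B A f) (pmor F C A g) (pmor F D B p) (pmor F D C q))"

definition EP :: "('a, nat \<times> 'a) psh" where
  "EP = \<lparr> pobj = (\<lambda>X. {(x, llab X x) | x. x \<in> lcarrier X}),
          pmor = (\<lambda>X Y s (x, l). (s x, l)) \<rparr>"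

definition PfP :: "('a, 'x) psh \<Rightarrow> ('a, 'x set) psh" where
  "PfP F = \<lparr> pobj = (\<lambda>X. {S. finite S \<and> S \<subseteq> pobj F X}),
             pmor = (\<lambda>X Y s S. pmor F X Y s ` S) \<rparr>"

definition DeltaP :: "('a, 'x) psh \<Rightarrow> ('a, 'x) psh" where
  "DeltaP F = \<lparr> pobj = (\<lambda>X. pobj F (delta X)),
                pmor = (\<lambda>X Y s. pmor F (delta X) (delta Y) (delta_mor X Y s)) \<rparr>"

definition prodP :: "('a, 'x) psh \<Rightarrow> ('a, 'y) psh \<Rightarrow> ('a, 'x \<times> 'y) psh" where
  "prodP F G = \<lparr> pobj = (\<lambda>X. pobj F X \<times> pobj G X),
                 pmor = (\<lambda>X Y s (x, y). (pmor F X Y s x, pmor G X Y s y)) \<rparr>"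

definition ActP :: "('a, 'a) psh" where
  "ActP = \<lparr> pobj = (\<lambda>X. UNIV), pmor = (\<lambda>X Y s a. a) \<rparr>"

definition LP :: "('a, 'a \<times> (nat \<times> 'a) set) psh" where
  "LP = prodP ActP (PfP EP)"

definition BP :: "('a, 'x) psh \<Rightarrow> ('a, (('a \<times> (nat \<times> 'a) set) \<times> 'x) set) psh" where
  "BP F = PfP (prodP LP (DeltaP F))"

end

theory Submission imports Defs begin

lemma lposetD:
  assumes "lposet X"
  shows "finite (lcarrier X)" "x \<in> lcarrier X \<Longrightarrow> lle X x x"
    "x \<in> lcarrier X \<Longrightarrow> y \<in> lcarrier X \<Longrightarrow> lle X x y \<Longrightarrow> lle X y x \<Longrightarrow> x = y"
    "x \<in> lcarrier X \<Longrightarrow> y \<in> lcarrier X \<Longrightarrow> z \<in> lcarrier X \<Longrightarrow> lle X x y \<Longrightarrow> lle X y z \<Longrightarrow> lle X x z"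
  using assms unfolding lposet_def by blast+

lemma order_embD:
  assumes "order_emb X Y f"
  shows "x \<in> lcarrier X \<Longrightarrow> f x \<in> lcarrier Y" "x \<in> lcarrier X \<Longrightarrow> llab Y (f x) = llab X x"
    "x \<in> lcarrier X \<Longrightarrow> y \<in> lcarrier X \<Longrightarrow> lle Y (f x) (f y) = lle X x y"
  using assms unfolding order_emb_def by auto

lemma order_emb_inj:
  assumes "lposet X" "order_emb X Y f" shows "inj_on f (lcarrier X)"
proof (rule inj_onI)
  fix x y assume xy: "x \<in> lcarrier X" "y \<in> lcarrier X" "f x = f y"
  have r: "lle Y (f x) (f x)" "lle Y (f y) (f y)"
    using order_embD(3)[OF assms(2)] lposetD(2)[OF assms(1)] xy by auto
  have "lle X x y" "lle X y x" using r xy order_embD(3)[OF assms(2)] by metis+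
  then show "x = y" using lposetD(3)[OF assms(1)] xy by blast
qed

lemma order_emb_cong:
  assumes "order_emb X Y f" "\<And>x. x \<in> lcarrier X \<Longrightarrow> f x = f' x" shows "order_emb X Y f'"
  using assms unfolding order_emb_def Pi_def by auto

lemma order_emb_comp:
  assumes "order_emb X Y f" "order_emb Y Z g" shows "order_emb X Z (\<lambda>x. g (f x))"
  using assms unfolding order_emb_def Pi_def by auto

lemma order_emb_inv:
  assumes "bij_betw f (lcarrier X) (lcarrier Y)" "order_emb X Y f"
  shows "order_emb Y X (inv_into (lcarrier X) f)"
  unfolding order_emb_def
proof (intro conjI ballI)
  show "inv_into (lcarrier X) f \<in> lcarrier Y \<rightarrow> lcarrier X"
    using assms(1) unfolding bij_betw_def by (auto intro: inv_into_into)
  fix y assume y: "y \<in> lcarrier Y"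
  have fy: "f (inv_into (lcarrier X) f y) = y" using assms(1) y by (simp add: bij_betw_def f_inv_into_f)
  have iy: "inv_into (lcarrier X) f y \<in> lcarrier X" using assms(1) y unfolding bij_betw_def by (auto intro: inv_into_into)
  show "llab X (inv_into (lcarrier X) f y) = llab Y y"
    using order_embD(2)[OF assms(2) iy] fy by simp
  fix z assume z: "z \<in> lcarrier Y"
  have fz: "f (inv_into (lcarrier X) f z) = z" using assms(1) z by (simp add: bij_betw_def f_inv_into_f)
  have iz: "inv_into (lcarrier X) f z \<in> lcarrier X" using assms(1) z unfolding bij_betw_def by (auto intro: inv_into_into)
  show "lle X (inv_into (lcarrier X) f y) (inv_into (lcarrier X) f z) = lle Y y z"
    using order_embD(3)[OF assms(2) iy iz] fy fz by simp
qed

lemma lpo_iso_sym: "lpo_iso X Y \<Longrightarrow> lpo_iso Y X"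
  unfolding lpo_iso_def
proof (elim exE conjE)
  fix f assume "bij_betw f (lcarrier X) (lcarrier Y)" "order_emb X Y f"
  then show "\<exists>g. bij_betw g (lcarrier Y) (lcarrier X) \<and> order_emb Y X g"
    using bij_betw_inv_into[of f] order_emb_inv[of f] by blast
qed

lemma lpo_iso_trans: "lpo_iso X Y \<Longrightarrow> lpo_iso Y Z \<Longrightarrow> lpo_iso X Z"
  unfolding lpo_iso_def
proof (elim exE conjE)
  fix f g assume "bij_betw f (lcarrier X) (lcarrier Y)" "order_emb X Y f"
    "bij_betw g (lcarrier Y) (lcarrier Z)" "order_emb Y Z g"
  then show "\<exists>h. bij_betw h (lcarrier X) (lcarrier Z) \<and> order_emb X Z h"
  proof (intro exI[of _ "\<lambda>x. g (f x)"] conjI)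
    show "order_emb X Z (\<lambda>x. g (f x))" using order_emb_comp[OF \<open>order_emb X Y f\<close> \<open>order_emb Y Z g\<close>] .
    show "bij_betw (\<lambda>x. g (f x)) (lcarrier X) (lcarrier Z)"
      using bij_betw_trans[OF \<open>bij_betw f (lcarrier X) (lcarrier Y)\<close> \<open>bij_betw g (lcarrier Y) (lcarrier Z)\<close>]
      unfolding o_def .
  qed
qed

lemma exists_nat_rep:
  assumes "lposet (X :: ('e,'a) lposet)"
  shows "\<exists>Y :: (nat,'a) lposet. lposet Y \<and> lpo_iso Y X"
proof -
  obtain h where h: "bij_betw h {0..<card (lcarrier X)} (lcarrier X)"
    using ex_bij_betw_nat_finite lposetD(1)[OF assms] by blast
  define Y where "Y = \<lparr>lcarrier = {0..<card (lcarrier X)}, lle = (\<lambda>a b. lle X (h a) (h b)),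
     llab = (\<lambda>a. llab X (h a))\<rparr>"
  have hin: "\<And>a. a \<in> lcarrier Y \<Longrightarrow> h a \<in> lcarrier X" using h unfolding Y_def bij_betw_def by auto
  have hinj: "inj_on h (lcarrier Y)" using h unfolding Y_def bij_betw_def by auto
  have "lposet Y" unfolding lposet_def
  proof (intro conjI ballI impI)
    show "finite (lcarrier Y)" by (simp add: Y_def)
    fix x assume x: "x \<in> lcarrier Y"
    show "lle Y x x" using lposetD(2)[OF assms hin[OF x]] by (simp add: Y_def)
    fix y assume y: "y \<in> lcarrier Y"
    { assume "lle Y x y \<and> lle Y y x"
      then have "h x = h y" using lposetD(3)[OF assms hin[OF x] hin[OF y]] by (simp add: Y_def)
      then show "x = y" using hinj x y unfolding inj_on_def by blast }
    fix z assume z: "z \<in> lcarrier Y" "lle Y x y \<and> lle Y y z"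
    then show "lle Y x z" using lposetD(4)[OF assms hin[OF x] hin[OF y] hin[OF z(1)]] by (simp add: Y_def)
  qed
  moreover have "lpo_iso Y X" unfolding lpo_iso_def order_emb_def
    using h hin by (intro exI[of _ h]) (auto simp: Y_def)
  ultimately show ?thesis by blast
qed

lemma rep_props:
  assumes "lposet X" shows "lposet (rep X)" "lpo_iso (rep X) X"
  using someI_ex[OF exists_nat_rep[OF assms]] unfolding rep_def by auto

lemma rep_cong:
  assumes "lpo_iso X X'" shows "rep X = rep X'"
proof -
  have "(\<lambda>Y. lposet Y \<and> lpo_iso Y X) = (\<lambda>Y. lposet Y \<and> lpo_iso Y X')"
    using lpo_iso_trans[OF _ assms] lpo_iso_trans[OF _ lpo_iso_sym[OF assms]] by (intro ext iffI) auto
  then show ?thesis unfolding rep_def by (rule arg_cong[where f=Eps])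
qed

lemma rep_obs: assumes "lposet X" shows "rep X \<in> obs"
  using rep_props[OF assms] rep_cong[of "rep X" X] unfolding obs_def by simp

lemma obsD: "X \<in> obs \<Longrightarrow> lposet X" unfolding obs_def by simp

lemma homD: "f \<in> hom X Y \<Longrightarrow> order_emb X Y f" "f \<in> hom X Y \<Longrightarrow> f \<in> extensional (lcarrier X)"
  unfolding hom_def by auto


lemma draw_simps:
  "lcarrier (draw X) = Inl ` lcarrier X \<union> {Inr (K, a) | K a. K \<subseteq> lcarrier X \<and> antichain X K}"
  "lle (draw X) = draw_le X" "llab (draw X) = draw_lab X"
  by (simp_all add: draw_def)

lemma draw_carrier_cases:
  assumes "x \<in> lcarrier (draw X)"
  obtains a where "x = Inl a" "a \<in> lcarrier X"
  | K c where "x = Inr (K, c)" "K \<subseteq> lcarrier X" "antichain X K"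
  using assms by (auto simp: draw_simps)

lemma draw_le_trans:
  assumes X: "lposet X" and x: "x \<in> lcarrier (draw X)" and y: "y \<in> lcarrier (draw X)"
    and z: "z \<in> lcarrier (draw X)" and xy: "draw_le X x y" and yz: "draw_le X y z"
  shows "draw_le X x z"
proof -
  note tr = lposetD(4)[OF X]
  show ?thesis
  proof (cases rule: draw_carrier_cases[OF x])
    case (1 a)
    show ?thesis
    proof (cases rule: draw_carrier_cases[OF y])
      case (1 b)
      show ?thesis
      proof (cases rule: draw_carrier_cases[OF z])
        case (1 c)
        have "lle X a b" "lle X b c" using \<open>x = Inl a\<close> \<open>y = Inl b\<close> \<open>z = Inl c\<close> xy yz by simp_all
        then have "lle X a c" using tr[of a b c] \<open>a \<in> lcarrier X\<close> \<open>b \<in> lcarrier X\<close> \<open>c \<in> lcarrier X\<close> by simp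
        then show ?thesis using \<open>x = Inl a\<close> \<open>z = Inl c\<close> by simp
      next
        case (2 K c)
        have "lle X a b" using \<open>x = Inl a\<close> \<open>y = Inl b\<close> xy by simp
        moreover obtain k where "k \<in> K" "lle X b k" using \<open>y = Inl b\<close> \<open>z = Inr (K, c)\<close> yz by auto
        ultimately have "lle X a k" using tr[of a b k] \<open>a \<in> lcarrier X\<close> \<open>b \<in> lcarrier X\<close> \<open>K \<subseteq> lcarrier X\<close> by auto
        then show ?thesis using \<open>x = Inl a\<close> \<open>z = Inr (K, c)\<close> \<open>k \<in> K\<close> by auto
      qed
    next
      case (2 K c)
      show ?thesis
      proof (cases rule: draw_carrier_cases[OF z])
        case (1 d) then show ?thesis using \<open>y = Inr (K, c)\<close> yz by simp
      next
        case (2 K' c') then show ?thesis using \<open>x = Inl a\<close> \<open>y = Inr (K, c)\<close> xy yz by simp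
      qed
    qed
  next
    case (2 K c)
    show ?thesis
    proof (cases rule: draw_carrier_cases[OF y])
      case (1 b) then show ?thesis using \<open>x = Inr (K, c)\<close> xy by simp
    next
      case (2 K' c') then show ?thesis using \<open>x = Inr (K, c)\<close> xy yz by simp
    qed
  qed
qed

lemma draw_le_antisym:
  assumes X: "lposet X" and x: "x \<in> lcarrier (draw X)" and y: "y \<in> lcarrier (draw X)"
    and xy: "draw_le X x y" and yx: "draw_le X y x"
  shows "x = y"
proof (cases rule: draw_carrier_cases[OF x])
  case (1 a)
  show ?thesis
  proof (cases rule: draw_carrier_cases[OF y])
    case (1 b)
    have "lle X a b" "lle X b a" using \<open>x = Inl a\<close> \<open>y = Inl b\<close> xy yx by simp_all
    then have "a = b" using lposetD(3)[OF X \<open>a \<in> lcarrier X\<close> \<open>b \<in> lcarrier X\<close>] by blast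
    then show ?thesis using \<open>x = Inl a\<close> \<open>y = Inl b\<close> by simp
  next
    case (2 K c) then show ?thesis using \<open>x = Inl a\<close> yx by simp
  qed
next
  case (2 K c)
  show ?thesis
  proof (cases rule: draw_carrier_cases[OF y])
    case (1 b) then show ?thesis using \<open>x = Inr (K, c)\<close> xy by simp
  next
    case (2 K' c') then show ?thesis using \<open>x = Inr (K, c)\<close> xy by simp
  qed
qed

lemma draw_lposet:
  assumes "lposet (X :: ('e, 'a::finite) lposet)" shows "lposet (draw X)"
  unfolding lposet_def
proof (intro conjI ballI impI)
  have fin: "finite (Inr ` (Pow (lcarrier X) \<times> (UNIV :: 'a set)) :: ('e + 'e set \<times> 'a) set)"
    using lposetD(1)[OF assms] by simp
  have sub: "({Inr (K, a) | K a. K \<subseteq> lcarrier X \<and> antichain X K} :: ('e + 'e set \<times> 'a) set) \<subseteq>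
     Inr ` (Pow (lcarrier X) \<times> (UNIV :: 'a set))" by blast
  have "finite ({Inr (K, a) | K a. K \<subseteq> lcarrier X \<and> antichain X K} :: ('e + 'e set \<times> 'a) set)"
    using finite_subset[OF sub fin] .
  then show "finite (lcarrier (draw X))" using lposetD(1)[OF assms] by (simp add: draw_simps)
  fix x assume x: "x \<in> lcarrier (draw X)"
  show "lle (draw X) x x"
  proof (cases rule: draw_carrier_cases[OF x])
    case (1 a) then show ?thesis using lposetD(2)[OF assms, of a] by (simp add: draw_simps)
  next
    case (2 K c) then show ?thesis by (simp add: draw_simps)
  qed
  fix y assume y: "y \<in> lcarrier (draw X)"
  { assume xy: "lle (draw X) x y \<and> lle (draw X) y x"
    show "x = y" using draw_le_antisym[OF assms x y] xy by (simp add: draw_simps) }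
  fix z assume z: "z \<in> lcarrier (draw X)" "lle (draw X) x y \<and> lle (draw X) y z"
  have "draw_le X x z" using draw_le_trans[OF assms x y z(1)] z(2) by (simp add: draw_simps)
  then show "lle (draw X) x z" by (simp add: draw_simps)
qed

lemma antichain_image:
  assumes "order_emb X Y s" "K \<subseteq> lcarrier X" "antichain X K"
  shows "antichain Y (s ` K)"
  unfolding antichain_def
proof (intro ballI impI)
  fix u v assume "u \<in> s ` K" "v \<in> s ` K" "lle Y u v"
  then obtain k1 k2 where k: "k1 \<in> K" "k2 \<in> K" "u = s k1" "v = s k2" "lle Y (s k1) (s k2)" by blast
  have "k1 \<in> lcarrier X" "k2 \<in> lcarrier X" using k assms(2) by auto
  then have "lle X k1 k2" using order_embD(3)[OF assms(1), of k1 k2] k(5) by simp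
  then have "k1 = k2" using assms(3) k(1,2) unfolding antichain_def by blast
  then show "u = v" using k by simp
qed

lemma draw_map_emb:
  assumes "lposet X" "order_emb X Y s"
  shows "order_emb (draw X) (draw Y) (draw_map s)"
  unfolding order_emb_def
proof (intro conjI ballI)
  have inj: "inj_on s (lcarrier X)" using order_emb_inj[OF assms] .
  show "draw_map s \<in> lcarrier (draw X) \<rightarrow> lcarrier (draw Y)"
  proof
    fix x assume x: "x \<in> lcarrier (draw X)"
    show "draw_map s x \<in> lcarrier (draw Y)"
    proof (cases rule: draw_carrier_cases[OF x])
      case (1 a) then show ?thesis using order_embD(1)[OF assms(2), of a] by (simp add: draw_simps)
    next
      case (2 K c)
      have "antichain Y (s ` K)" using antichain_image[OF assms(2) 2(2,3)] .
      moreover have "s ` K \<subseteq> lcarrier Y" using 2(2) order_embD(1)[OF assms(2)] by blast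
      ultimately have "Inr (s ` K, c) \<in> lcarrier (draw Y)" unfolding draw_simps by blast
      then show ?thesis using 2(1) by simp
    qed
  qed
  fix x assume x: "x \<in> lcarrier (draw X)"
  show "llab (draw Y) (draw_map s x) = llab (draw X) x"
  proof (cases rule: draw_carrier_cases[OF x])
    case (1 a) then show ?thesis using order_embD(2)[OF assms(2), of a] by (simp add: draw_simps)
  next
    case (2 K c) then show ?thesis by (simp add: draw_simps)
  qed
  fix y assume y: "y \<in> lcarrier (draw X)"
  show "lle (draw Y) (draw_map s x) (draw_map s y) = lle (draw X) x y"
  proof (cases rule: draw_carrier_cases[OF x])
    case (1 a)
    show ?thesis
    proof (cases rule: draw_carrier_cases[OF y])
      case (1 b)
      have "lle (draw Y) (draw_map s x) (draw_map s y) = lle Y (s a) (s b)"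
        using \<open>x = Inl a\<close> \<open>y = Inl b\<close> by (simp add: draw_simps)
      also have "\<dots> = lle X a b" using order_embD(3)[OF assms(2) \<open>a \<in> lcarrier X\<close> \<open>b \<in> lcarrier X\<close>] .
      also have "\<dots> = lle (draw X) x y" using \<open>x = Inl a\<close> \<open>y = Inl b\<close> by (simp add: draw_simps)
      finally show ?thesis .
    next
      case (2 K c)
      have "(\<exists>k\<in>s ` K. lle Y (s a) k) = (\<exists>k\<in>K. lle X a k)"
      proof
        assume "\<exists>k\<in>s ` K. lle Y (s a) k"
        then obtain k where "k \<in> K" "lle Y (s a) (s k)" by blast
        then show "\<exists>k\<in>K. lle X a k" using order_embD(3)[OF assms(2) \<open>a \<in> lcarrier X\<close>, of k] 2(2) by auto
      next
        assume "\<exists>k\<in>K. lle X a k"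
        then obtain k where "k \<in> K" "lle X a k" by blast
        then show "\<exists>k\<in>s ` K. lle Y (s a) k" using order_embD(3)[OF assms(2) \<open>a \<in> lcarrier X\<close>, of k] 2(2) by auto
      qed
      then show ?thesis using \<open>x = Inl a\<close> \<open>y = Inr (K, c)\<close> by (simp add: draw_simps)
    qed
  next
    case (2 K c)
    show ?thesis
    proof (cases rule: draw_carrier_cases[OF y])
      case (1 b) then show ?thesis using \<open>x = Inr (K, c)\<close> by (simp add: draw_simps)
    next
      case (2 K' c')
      have "(s ` K = s ` K') = (K = K')" using inj_on_image_eq_iff[OF inj \<open>K \<subseteq> lcarrier X\<close> 2(2)] .
      then show ?thesis using \<open>x = Inr (K, c)\<close> \<open>y = Inr (K', c')\<close> by (simp add: draw_simps)
    qed
  qed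
qed

lemma delta_obs: "(X :: (nat, 'a::finite) lposet) \<in> obs \<Longrightarrow> delta X \<in> obs"
  unfolding delta_def by (intro rep_obs draw_lposet obsD)

lemma delta_iso_props:
  assumes "(X :: (nat, 'a::finite) lposet) \<in> obs"
  shows "bij_betw (delta_iso X) (lcarrier (draw X)) (lcarrier (delta X))"
    "order_emb (draw X) (delta X) (delta_iso X)"
proof -
  have "lpo_iso (draw X) (delta X)" unfolding delta_def
    by (rule lpo_iso_sym[OF rep_props(2)[OF draw_lposet[OF obsD[OF assms]]]])
  then have "\<exists>f. bij_betw f (lcarrier (draw X)) (lcarrier (delta X)) \<and> order_emb (draw X) (delta X) f"
    unfolding lpo_iso_def .
  from someI_ex[OF this] show "bij_betw (delta_iso X) (lcarrier (draw X)) (lcarrier (delta X))"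
    "order_emb (draw X) (delta X) (delta_iso X)" unfolding delta_iso_def by auto
qed

abbreviation dinv :: "(nat, 'a) lposet \<Rightarrow> nat \<Rightarrow> nat + (nat set \<times> 'a)" where
  "dinv X \<equiv> inv_into (lcarrier (draw X)) (delta_iso X)"

lemma dinv_props:
  assumes "(X :: (nat, 'a::finite) lposet) \<in> obs"
  shows "bij_betw (dinv X) (lcarrier (delta X)) (lcarrier (draw X))"
    "order_emb (delta X) (draw X) (dinv X)"
    "y \<in> lcarrier (delta X) \<Longrightarrow> delta_iso X (dinv X y) = y"
    "x \<in> lcarrier (draw X) \<Longrightarrow> dinv X (delta_iso X x) = x"
    "y \<in> lcarrier (delta X) \<Longrightarrow> dinv X y \<in> lcarrier (draw X)"
    "x \<in> lcarrier (draw X) \<Longrightarrow> delta_iso X x \<in> lcarrier (delta X)"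
proof -
  note b = delta_iso_props[OF assms]
  show "bij_betw (dinv X) (lcarrier (delta X)) (lcarrier (draw X))" using bij_betw_inv_into[OF b(1)] .
  show "order_emb (delta X) (draw X) (dinv X)" using order_emb_inv[OF b] .
  show "y \<in> lcarrier (delta X) \<Longrightarrow> delta_iso X (dinv X y) = y"
    using b(1) unfolding bij_betw_def by (simp add: f_inv_into_f)
  show "x \<in> lcarrier (draw X) \<Longrightarrow> dinv X (delta_iso X x) = x"
    using b(1) unfolding bij_betw_def by (simp add: inv_into_f_f)
  show "y \<in> lcarrier (delta X) \<Longrightarrow> dinv X y \<in> lcarrier (draw X)"
    using b(1) unfolding bij_betw_def by (auto intro: inv_into_into)
  show "x \<in> lcarrier (draw X) \<Longrightarrow> delta_iso X x \<in> lcarrier (delta X)"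
    using b(1) unfolding bij_betw_def by auto
qed

lemma delta_mor_apply:
  "y \<in> lcarrier (delta X) \<Longrightarrow> delta_mor X Y s y = delta_iso Y (draw_map s (dinv X y))"
  by (simp add: delta_mor_def)

lemma delta_mor_hom:
  assumes X: "(X :: (nat, 'a::finite) lposet) \<in> obs" and Y: "Y \<in> obs" and s: "s \<in> hom X Y"
  shows "delta_mor X Y s \<in> hom (delta X) (delta Y)"
proof -
  have "order_emb (delta X) (delta Y) (\<lambda>y. delta_iso Y (draw_map s (dinv X y)))"
    by (intro order_emb_comp[OF order_emb_comp[OF dinv_props(2)[OF X] draw_map_emb] delta_iso_props(2)[OF Y]]
        obsD X homD(1)[OF s])
  then have "order_emb (delta X) (delta Y) (delta_mor X Y s)"
    by (rule order_emb_cong) (simp add: delta_mor_apply)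
  then show ?thesis unfolding hom_def delta_mor_def by simp
qed

lemma draw_map_id: "x \<in> lcarrier (draw X) \<Longrightarrow> draw_map (idm X) x = x"
  by (auto simp: draw_simps idm_def)

lemma draw_map_comp: "x \<in> lcarrier (draw X) \<Longrightarrow> draw_map (comp X t s) x = draw_map t (draw_map s x)"
  by (auto simp: draw_simps comp_def compose_def image_image subset_iff intro!: image_cong)

lemma delta_mor_id:
  assumes X: "(X :: (nat, 'a::finite) lposet) \<in> obs"
  shows "delta_mor X X (idm X) = idm (delta X)"
proof
  fix y show "delta_mor X X (idm X) y = idm (delta X) y"
  proof (cases "y \<in> lcarrier (delta X)")
    case True
    then show ?thesis using dinv_props(3,5)[OF X True] draw_map_id[OF dinv_props(5)[OF X True]]
      by (simp add: delta_mor_apply idm_def)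
  next
    case False
    then show ?thesis by (simp add: delta_mor_def idm_def)
  qed
qed

lemma delta_mor_comp:
  assumes X: "(X :: (nat, 'a::finite) lposet) \<in> obs" and Y: "Y \<in> obs" and Z: "Z \<in> obs"
    and s: "s \<in> hom X Y"
  shows "delta_mor X Z (comp X t s) = comp (delta X) (delta_mor Y Z t) (delta_mor X Y s)"
proof
  fix y show "delta_mor X Z (comp X t s) y = comp (delta X) (delta_mor Y Z t) (delta_mor X Y s) y"
  proof (cases "y \<in> lcarrier (delta X)")
    case True
    have d: "draw_map s (dinv X y) \<in> lcarrier (draw Y)"
      using draw_map_emb[OF obsD[OF X] homD(1)[OF s]] dinv_props(5)[OF X True]
      unfolding order_emb_def by auto
    have "delta_mor X Y s y \<in> lcarrier (delta Y)"
      using dinv_props(6)[OF Y d] True by (simp add: delta_mor_apply)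
    have "comp (delta X) (delta_mor Y Z t) (delta_mor X Y s) y = delta_mor Y Z t (delta_mor X Y s y)"
      using True by (simp add: comp_def compose_def)
    also have "\<dots> = delta_iso Z (draw_map t (draw_map s (dinv X y)))"
      using \<open>delta_mor X Y s y \<in> lcarrier (delta Y)\<close> True
      by (simp add: delta_mor_apply dinv_props(4)[OF Y d])
    also have "\<dots> = delta_mor X Z (comp X t s) y"
      using True by (simp add: delta_mor_apply draw_map_comp[OF dinv_props(5)[OF X True]])
    finally show ?thesis by simp
  next
    case False then show ?thesis by (simp add: delta_mor_def comp_def compose_def)
  qed
qed


section \<open>Pullbacks in O\<close>

lemma comp_apply': "x \<in> lcarrier X \<Longrightarrow> comp X g f x = g (f x)"
  by (simp add: comp_def compose_def)

lemma hom_in: "f \<in> hom X Y \<Longrightarrow> x \<in> lcarrier X \<Longrightarrow> f x \<in> lcarrier Y"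
  using order_embD(1)[OF homD(1)] by blast

lemma idm_hom: "lposet D \<Longrightarrow> idm D \<in> hom D D"
  unfolding hom_def idm_def order_emb_def by auto

lemma comp_idm_left:
  assumes "h \<in> hom E D" shows "comp E (idm D) h = h"
proof (rule extensionalityI[OF _ homD(2)[OF assms]])
  show "comp E (idm D) h \<in> extensional (lcarrier E)" by (simp add: comp_def)
  fix e assume "e \<in> lcarrier E"
  then show "comp E (idm D) h e = h e" using hom_in[OF assms] by (simp add: comp_apply' idm_def)
qed

lemma kernel_pair:
  assumes B: "B \<in> obs" and D: "D \<in> obs" and p: "p \<in> hom D B"
  shows "is_pullback B D D D p p (idm D) (idm D)"
  unfolding is_pullback_def
proof (intro conjI ballI impI)
  show "idm D \<in> hom D D" using idm_hom[OF obsD[OF D]] .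
  fix E u v assume E: "E \<in> obs" and u: "u \<in> hom E D" and v: "v \<in> hom E D"
    and uv: "comp E p u = comp E p v"
  have "u = v"
  proof (rule extensionalityI[OF homD(2)[OF u] homD(2)[OF v]])
    fix e assume e: "e \<in> lcarrier E"
    have "p (u e) = p (v e)" using fun_cong[OF uv, of e] e by (simp add: comp_apply')
    then show "u e = v e" using order_emb_inj[OF obsD[OF D] homD(1)[OF p]] hom_in[OF u e] hom_in[OF v e]
      unfolding inj_on_def by blast
  qed
  show "\<exists>!h. h \<in> hom E D \<and> comp E (idm D) h = u \<and> comp E (idm D) h = v"
  proof (rule ex1I[of _ u])
    show "u \<in> hom E D \<and> comp E (idm D) u = u \<and> comp E (idm D) u = v"
      using u comp_idm_left[OF u] \<open>u = v\<close> by simp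
    fix h assume "h \<in> hom E D \<and> comp E (idm D) h = u \<and> comp E (idm D) h = v"
    then show "h = u" using comp_idm_left[of h E D] by simp
  qed
qed (use assms idm_hom[OF obsD[OF D]] in auto)

lemma pmor_inj:
  assumes F: "is_functor F" and PF: "preserves_pullbacks F"
    and B: "B \<in> obs" and D: "D \<in> obs" and p: "p \<in> hom D B"
  shows "inj_on (pmor F D B p) (pobj F D)"
proof (rule inj_onI)
  fix x y assume x: "x \<in> pobj F D" and y: "y \<in> pobj F D" and xy: "pmor F D B p x = pmor F D B p y"
  have sp: "set_pullback (pobj F B) (pobj F D) (pobj F D) (pobj F D)
      (pmor F D B p) (pmor F D B p) (pmor F D D (idm D)) (pmor F D D (idm D))"
    using PF kernel_pair[OF B D p] unfolding preserves_pullbacks_def by blast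
  have idd: "\<And>d. d \<in> pobj F D \<Longrightarrow> pmor F D D (idm D) d = d" using F D unfolding is_functor_def by blast
  obtain d where "d \<in> pobj F D" "pmor F D D (idm D) d = x" "pmor F D D (idm D) d = y"
    using sp x y xy unfolding set_pullback_def by blast
  then show "x = y" using idd[of d] by simp
qed

lemma is_pullbackD:
  assumes "is_pullback A B C D f g p q"
  shows "A \<in> obs" "B \<in> obs" "C \<in> obs" "D \<in> obs" "f \<in> hom B A" "g \<in> hom C A" "p \<in> hom D B" "q \<in> hom D C"
    "comp D f p = comp D g q"
    "\<And>E u v. E \<in> obs \<Longrightarrow> u \<in> hom E B \<Longrightarrow> v \<in> hom E C \<Longrightarrow> comp E f u = comp E g v \<Longrightarrow>
        \<exists>!h. h \<in> hom E D \<and> comp E p h = u \<and> comp E q h = v"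
  using assms unfolding is_pullback_def by blast+

lemma pb_comm:
  assumes "is_pullback A B C D f g p q" "d \<in> lcarrier D" shows "f (p d) = g (q d)"
  using fun_cong[OF is_pullbackD(9)[OF assms(1)], of d] assms(2) by (simp add: comp_apply')

lemma singleton_obs:
  fixes l :: 'a
  obtains E :: "(nat, 'a) lposet" and e0 where "E \<in> obs" "lcarrier E = {e0}" "llab E e0 = l"
proof -
  define S :: "(nat, 'a) lposet" where "S = \<lparr>lcarrier = {0}, lle = (\<lambda>x y. True), llab = (\<lambda>_. l)\<rparr>"
  have S: "lposet S" unfolding lposet_def S_def by simp
  have E: "rep S \<in> obs" using rep_obs[OF S] .
  obtain \<phi> where \<phi>: "bij_betw \<phi> (lcarrier (rep S)) (lcarrier S)" "order_emb (rep S) S \<phi>"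
    using rep_props(2)[OF S] unfolding lpo_iso_def by blast
  have "0 \<in> \<phi> ` lcarrier (rep S)" using \<phi>(1) unfolding bij_betw_def S_def by simp
  then obtain e0 where e0: "e0 \<in> lcarrier (rep S)" "\<phi> e0 = 0" by auto
  have "lcarrier (rep S) = {e0}"
  proof
    show "lcarrier (rep S) \<subseteq> {e0}"
    proof
      fix e assume e: "e \<in> lcarrier (rep S)"
      then have "\<phi> e \<in> lcarrier S" using \<phi>(1) unfolding bij_betw_def by blast
      then have "\<phi> e = \<phi> e0" using e0 by (simp add: S_def)
      then show "e \<in> {e0}" using \<phi>(1) e e0(1) unfolding bij_betw_def inj_on_def by blast
    qed
  qed (use e0 in simp)
  moreover have "llab (rep S) e0 = l" using order_embD(2)[OF \<phi>(2) e0(1)] by (simp add: S_def)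
  ultimately show ?thesis using that E by blast
qed

lemma const_hom:
  assumes E: "E \<in> obs" "lcarrier E = {e0}" and B: "B \<in> obs" and b: "b \<in> lcarrier B"
    and l: "llab B b = llab E e0"
  shows "restrict (\<lambda>_. b) (lcarrier E) \<in> hom E B"
proof -
  have r1: "lle B b b" using lposetD(2)[OF obsD[OF B] b] .
  have r2: "lle E e0 e0" using lposetD(2)[OF obsD[OF E(1)], of e0] E(2) by simp
  have "order_emb E B (restrict (\<lambda>_. b) (lcarrier E))"
    unfolding order_emb_def using E(2) b l r1 r2 by simp
  then show ?thesis unfolding hom_def by simp
qed

lemma pb_cover:
  assumes pb: "is_pullback A B C D f g p q" and b: "b \<in> lcarrier B" and c: "c \<in> lcarrier C"
    and fg: "f b = g c"
  shows "\<exists>d\<in>lcarrier D. p d = b \<and> q d = c"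
proof -
  note P = is_pullbackD[OF pb]
  obtain E e0 where E: "E \<in> obs" "lcarrier E = {e0}" "llab E e0 = llab B b"
    by (rule singleton_obs)
  have lc: "llab C c = llab B b"
    using order_embD(2)[OF homD(1)[OF P(5)] b] order_embD(2)[OF homD(1)[OF P(6)] c] fg by simp
  have u: "restrict (\<lambda>_. b) (lcarrier E) \<in> hom E B" using const_hom[OF E(1,2) P(2) b] E(3) by simp
  have v: "restrict (\<lambda>_. c) (lcarrier E) \<in> hom E C" using const_hom[OF E(1,2) P(3) c] E(3) lc by simp
  have "comp E f (restrict (\<lambda>_. b) (lcarrier E)) = comp E g (restrict (\<lambda>_. c) (lcarrier E))"
    using fg unfolding comp_def compose_def by (intro restrict_ext) simp
  then obtain h where h: "h \<in> hom E D" "comp E p h = restrict (\<lambda>_. b) (lcarrier E)"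
     "comp E q h = restrict (\<lambda>_. c) (lcarrier E)"
    using P(10)[OF E(1) u v] by blast
  have "h e0 \<in> lcarrier D" using hom_in[OF h(1)] E(2) by simp
  moreover have "p (h e0) = b" using fun_cong[OF h(2), of e0] E(2) by (simp add: comp_apply')
  moreover have "q (h e0) = c" using fun_cong[OF h(3), of e0] E(2) by (simp add: comp_apply')
  ultimately show ?thesis by blast
qed


section \<open>delta preserves pullbacks\<close>

lemma draw_pullback:
  assumes pb: "is_pullback A B C D f g p q" and x: "x \<in> lcarrier (draw B)"
    and y: "y \<in> lcarrier (draw C)" and eq: "draw_map f x = draw_map g y"
  shows "\<exists>z\<in>lcarrier (draw D). draw_map p z = x \<and> draw_map q z = y"
proof -
  note P = is_pullbackD[OF pb]
  have injp: "inj_on p (lcarrier D)" using order_emb_inj[OF obsD[OF P(4)] homD(1)[OF P(7)]] .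
  have injg: "inj_on g (lcarrier C)" using order_emb_inj[OF obsD[OF P(3)] homD(1)[OF P(6)]] .
  show ?thesis
  proof (cases rule: draw_carrier_cases[OF x])
    case (1 b)
    show ?thesis
    proof (cases rule: draw_carrier_cases[OF y])
      case (1 c)
      have "f b = g c" using eq \<open>x = Inl b\<close> \<open>y = Inl c\<close> by simp
      then obtain d where d: "d \<in> lcarrier D" "p d = b" "q d = c"
        using pb_cover[OF pb \<open>b \<in> lcarrier B\<close> \<open>c \<in> lcarrier C\<close>] by blast
      have "Inl d \<in> lcarrier (draw D)" using d(1) by (simp add: draw_simps)
      then show ?thesis using d \<open>x = Inl b\<close> \<open>y = Inl c\<close> by (intro bexI[of _ "Inl d"]) simp_all
    next
      case (2 K c) then show ?thesis using eq \<open>x = Inl b\<close> by simp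
    qed
  next
    case (2 K a)
    show ?thesis
    proof (cases rule: draw_carrier_cases[OF y])
      case (1 c) then show ?thesis using eq \<open>x = Inr (K, a)\<close> by simp
    next
      case (2 K' a')
      have fK: "f ` K = g ` K'" and aa: "a = a'" using eq \<open>x = Inr (K, a)\<close> \<open>y = Inr (K', a')\<close> by simp_all
      define K2 where "K2 = {d \<in> lcarrier D. p d \<in> K}"
      have sub: "K2 \<subseteq> lcarrier D" unfolding K2_def by blast
      have anti: "antichain D K2" unfolding antichain_def
      proof (intro ballI impI)
        fix d1 d2 assume d: "d1 \<in> K2" "d2 \<in> K2" "lle D d1 d2"
        have "lle B (p d1) (p d2)" using order_embD(3)[OF homD(1)[OF P(7)], of d1 d2] d sub by auto
        then have "p d1 = p d2" using \<open>antichain B K\<close> d unfolding antichain_def K2_def by blast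
        then show "d1 = d2" using injp d sub unfolding inj_on_def by blast
      qed
      have pK: "p ` K2 = K"
      proof
        show "p ` K2 \<subseteq> K" unfolding K2_def by blast
        show "K \<subseteq> p ` K2"
        proof
          fix k assume k: "k \<in> K"
          then have kB: "k \<in> lcarrier B" using \<open>K \<subseteq> lcarrier B\<close> by blast
          have "f k \<in> g ` K'" using fK k by blast
          then obtain c' where c': "c' \<in> K'" "f k = g c'" by blast
          then have "c' \<in> lcarrier C" using \<open>K' \<subseteq> lcarrier C\<close> by blast
          then obtain d where d: "d \<in> lcarrier D" "p d = k" "q d = c'"
            using pb_cover[OF pb kB _ c'(2)] by blast
          then show "k \<in> p ` K2" using k unfolding K2_def by blast
        qed
      qed
      have qK: "q ` K2 = K'"
      proof
        show "q ` K2 \<subseteq> K'"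
        proof
          fix c assume "c \<in> q ` K2"
          then obtain d where d: "d \<in> K2" "c = q d" by blast
          have dD: "d \<in> lcarrier D" and pd: "p d \<in> K" using d unfolding K2_def by auto
          have comm: "f (p d) = g (q d)" using pb_comm[OF pb dD] .
          have "f (p d) \<in> g ` K'" using fK pd by blast
          then obtain c' where c': "c' \<in> K'" "f (p d) = g c'" by blast
          have "q d \<in> lcarrier C" using hom_in[OF P(8) dD] .
          moreover have "c' \<in> lcarrier C" using c'(1) \<open>K' \<subseteq> lcarrier C\<close> by blast
          ultimately have "q d = c'" using inj_onD[OF injg, of "q d" c'] comm c'(2) by simp
          then show "c \<in> K'" using d c' by simp
        qed
        show "K' \<subseteq> q ` K2"
        proof
          fix c assume c: "c \<in> K'"
          then have cC: "c \<in> lcarrier C" using \<open>K' \<subseteq> lcarrier C\<close> by blast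
          have "g c \<in> f ` K" using fK c by blast
          then obtain k where k: "k \<in> K" "f k = g c" by auto
          then have "k \<in> lcarrier B" using \<open>K \<subseteq> lcarrier B\<close> by blast
          then obtain d where d: "d \<in> lcarrier D" "p d = k" "q d = c"
            using pb_cover[OF pb _ cC k(2)] by blast
          then show "c \<in> q ` K2" using k unfolding K2_def by blast
        qed
      qed
      have "Inr (K2, a) \<in> lcarrier (draw D)" using sub anti by (auto simp: draw_simps)
      moreover have "draw_map p (Inr (K2, a)) = x" using pK \<open>x = Inr (K, a)\<close> by simp
      moreover have "draw_map q (Inr (K2, a)) = y" using qK aa \<open>y = Inr (K', a')\<close> by simp
      ultimately show ?thesis by blast
    qed
  qed
qed

lemma lift_emb:
  assumes "order_emb D' B' p'" "order_emb E B' u" "\<And>e. e \<in> lcarrier E \<Longrightarrow> h e \<in> lcarrier D'"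
    "\<And>e. e \<in> lcarrier E \<Longrightarrow> p' (h e) = u e"
  shows "order_emb E D' h"
  unfolding order_emb_def
proof (intro conjI ballI)
  show "h \<in> lcarrier E \<rightarrow> lcarrier D'" using assms(3) by blast
  fix x assume x: "x \<in> lcarrier E"
  show "llab D' (h x) = llab E x"
    using order_embD(2)[OF assms(1) assms(3)[OF x]] order_embD(2)[OF assms(2) x] assms(4)[OF x] by simp
  fix y assume y: "y \<in> lcarrier E"
  show "lle D' (h x) (h y) = lle E x y"
    using order_embD(3)[OF assms(1) assms(3)[OF x] assms(3)[OF y]] order_embD(3)[OF assms(2) x y]
      assms(4)[OF x] assms(4)[OF y] by simp
qed


lemma delta_pullback:
  fixes A B C D :: "(nat, 'a::finite) lposet"
  assumes pb: "is_pullback A B C D f g p q"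
  shows "is_pullback (delta A) (delta B) (delta C) (delta D)
     (delta_mor B A f) (delta_mor C A g) (delta_mor D B p) (delta_mor D C q)"
proof -
  note P = is_pullbackD[OF pb]
  have hf: "delta_mor B A f \<in> hom (delta B) (delta A)" using delta_mor_hom[OF P(2) P(1) P(5)] .
  have hg: "delta_mor C A g \<in> hom (delta C) (delta A)" using delta_mor_hom[OF P(3) P(1) P(6)] .
  have hp: "delta_mor D B p \<in> hom (delta D) (delta B)" using delta_mor_hom[OF P(4) P(2) P(7)] .
  have hq: "delta_mor D C q \<in> hom (delta D) (delta C)" using delta_mor_hom[OF P(4) P(3) P(8)] .
  have comm: "comp (delta D) (delta_mor B A f) (delta_mor D B p) = comp (delta D) (delta_mor C A g) (delta_mor D C q)"
    using delta_mor_comp[OF P(4) P(2) P(1) P(7), of f] delta_mor_comp[OF P(4) P(3) P(1) P(8), of g] P(9)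
    by simp
  have injp: "inj_on (delta_mor D B p) (lcarrier (delta D))"
    using order_emb_inj[OF obsD[OF delta_obs[OF P(4)]] homD(1)[OF hp]] .
  have univ: "\<exists>!h. h \<in> hom E (delta D) \<and> comp E (delta_mor D B p) h = u \<and> comp E (delta_mor D C q) h = v"
    if E: "E \<in> obs" and u: "u \<in> hom E (delta B)" and v: "v \<in> hom E (delta C)"
      and uv: "comp E (delta_mor B A f) u = comp E (delta_mor C A g) v" for E u v
  proof -
    have ex: "\<exists>z. z \<in> lcarrier (draw D) \<and> draw_map p z = dinv B (u e) \<and> draw_map q z = dinv C (v e)"
      if e: "e \<in> lcarrier E" for e
    proof -
      have ue: "u e \<in> lcarrier (delta B)" using hom_in[OF u e] .
      have ve: "v e \<in> lcarrier (delta C)" using hom_in[OF v e] .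
      have xB: "dinv B (u e) \<in> lcarrier (draw B)" using dinv_props(5)[OF P(2) ue] .
      have yC: "dinv C (v e) \<in> lcarrier (draw C)" using dinv_props(5)[OF P(3) ve] .
      have fx: "draw_map f (dinv B (u e)) \<in> lcarrier (draw A)"
        using order_embD(1)[OF draw_map_emb[OF obsD[OF P(2)] homD(1)[OF P(5)]] xB] .
      have gy: "draw_map g (dinv C (v e)) \<in> lcarrier (draw A)"
        using order_embD(1)[OF draw_map_emb[OF obsD[OF P(3)] homD(1)[OF P(6)]] yC] .
      have "delta_mor B A f (u e) = delta_mor C A g (v e)"
        using fun_cong[OF uv, of e] e by (simp add: comp_apply')
      then have "delta_iso A (draw_map f (dinv B (u e))) = delta_iso A (draw_map g (dinv C (v e)))"
        using ue ve by (simp add: delta_mor_apply)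
      then have "draw_map f (dinv B (u e)) = draw_map g (dinv C (v e))"
        using inj_onD[OF bij_betw_imp_inj_on[OF delta_iso_props(1)[OF P(1)]] _ fx gy] by blast
      then show ?thesis using draw_pullback[OF pb xB yC] by blast
    qed
    define Z where "Z e = (SOME z. z \<in> lcarrier (draw D) \<and> draw_map p z = dinv B (u e) \<and> draw_map q z = dinv C (v e))" for e
    have Z: "Z e \<in> lcarrier (draw D)" "draw_map p (Z e) = dinv B (u e)" "draw_map q (Z e) = dinv C (v e)"
      if e: "e \<in> lcarrier E" for e
      using someI_ex[OF ex[OF e]] unfolding Z_def by blast+
    define h where "h = restrict (\<lambda>e. delta_iso D (Z e)) (lcarrier E)"
    have hin: "h e \<in> lcarrier (delta D)" if e: "e \<in> lcarrier E" for e
      using dinv_props(6)[OF P(4) Z(1)[OF e]] e by (simp add: h_def)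
    have hp_e: "delta_mor D B p (h e) = u e" if e: "e \<in> lcarrier E" for e
    proof -
      have "delta_mor D B p (h e) = delta_iso B (draw_map p (dinv D (delta_iso D (Z e))))"
        using hin[OF e] e by (simp add: delta_mor_apply h_def)
      also have "\<dots> = delta_iso B (dinv B (u e))" using dinv_props(4)[OF P(4) Z(1)[OF e]] Z(2)[OF e] by simp
      also have "\<dots> = u e" using dinv_props(3)[OF P(2) hom_in[OF u e]] .
      finally show ?thesis .
    qed
    have hq_e: "delta_mor D C q (h e) = v e" if e: "e \<in> lcarrier E" for e
    proof -
      have "delta_mor D C q (h e) = delta_iso C (draw_map q (dinv D (delta_iso D (Z e))))"
        using hin[OF e] e by (simp add: delta_mor_apply h_def)
      also have "\<dots> = delta_iso C (dinv C (v e))" using dinv_props(4)[OF P(4) Z(1)[OF e]] Z(3)[OF e] by simp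
      also have "\<dots> = v e" using dinv_props(3)[OF P(3) hom_in[OF v e]] .
      finally show ?thesis .
    qed
    have hhom: "h \<in> hom E (delta D)"
    proof -
      have "order_emb E (delta D) h"
        using lift_emb[OF homD(1)[OF hp] homD(1)[OF u] hin hp_e] .
      then show ?thesis unfolding hom_def h_def by simp
    qed
    have c1: "comp E (delta_mor D B p) h = u"
      by (rule extensionalityI[OF _ homD(2)[OF u]]) (simp_all add: comp_def comp_apply'[unfolded comp_def] hp_e)
    have c2: "comp E (delta_mor D C q) h = v"
      by (rule extensionalityI[OF _ homD(2)[OF v]]) (simp_all add: comp_def comp_apply'[unfolded comp_def] hq_e)
    show ?thesis
    proof (rule ex1I[of _ h])
      show "h \<in> hom E (delta D) \<and> comp E (delta_mor D B p) h = u \<and> comp E (delta_mor D C q) h = v"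
        using hhom c1 c2 by blast
      fix h' assume h': "h' \<in> hom E (delta D) \<and> comp E (delta_mor D B p) h' = u \<and> comp E (delta_mor D C q) h' = v"
      show "h' = h"
      proof (rule extensionalityI[OF homD(2) homD(2)])
        show "h' \<in> hom E (delta D)" using h' by blast
        show "h \<in> hom E (delta D)" using hhom .
        fix e assume e: "e \<in> lcarrier E"
        have "delta_mor D B p (h' e) = u e" using fun_cong[OF conjunct1[OF conjunct2[OF h']], of e] e
          by (simp add: comp_apply')
        then have "delta_mor D B p (h' e) = delta_mor D B p (h e)" using hp_e[OF e] by simp
        then show "h' e = h e" using inj_onD[OF injp _ hom_in[of h' E] hin[OF e]] h' e by blast
      qed
    qed
  qed
  show ?thesis unfolding is_pullback_def
    using delta_obs[OF P(1)] delta_obs[OF P(2)] delta_obs[OF P(3)] delta_obs[OF P(4)]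
      hf hg hp hq comm univ by blast
qed


section \<open>Presheaf constructions\<close>

lemma is_functorI:
  assumes a: "\<And>X Y s x. X \<in> obs \<Longrightarrow> Y \<in> obs \<Longrightarrow> s \<in> hom X Y \<Longrightarrow> x \<in> pobj F X \<Longrightarrow> pmor F X Y s x \<in> pobj F Y"
    and b: "\<And>X x. X \<in> obs \<Longrightarrow> x \<in> pobj F X \<Longrightarrow> pmor F X X (idm X) x = x"
    and c: "\<And>X Y Z s t x. X \<in> obs \<Longrightarrow> Y \<in> obs \<Longrightarrow> Z \<in> obs \<Longrightarrow> s \<in> hom X Y \<Longrightarrow> t \<in> hom Y Z \<Longrightarrow> x \<in> pobj F X \<Longrightarrow>
        pmor F X Z (comp X t s) x = pmor F Y Z t (pmor F X Y s x)"
  shows "is_functor F"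
  unfolding is_functor_def
proof (intro conjI ballI)
  show "\<And>X Y s x. X \<in> obs \<Longrightarrow> Y \<in> obs \<Longrightarrow> s \<in> hom X Y \<Longrightarrow> x \<in> pobj F X \<Longrightarrow> pmor F X Y s x \<in> pobj F Y" by (rule a)
  show "\<And>X x. X \<in> obs \<Longrightarrow> x \<in> pobj F X \<Longrightarrow> pmor F X X (idm X) x = x" by (rule b)
  show "\<And>X Y Z s t x. X \<in> obs \<Longrightarrow> Y \<in> obs \<Longrightarrow> Z \<in> obs \<Longrightarrow> s \<in> hom X Y \<Longrightarrow> t \<in> hom Y Z \<Longrightarrow> x \<in> pobj F X \<Longrightarrow>
        pmor F X Z (comp X t s) x = pmor F Y Z t (pmor F X Y s x)" by (rule c)
qed

lemma is_functorD:
  assumes "is_functor F"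
  shows "\<And>X Y s x. X \<in> obs \<Longrightarrow> Y \<in> obs \<Longrightarrow> s \<in> hom X Y \<Longrightarrow> x \<in> pobj F X \<Longrightarrow> pmor F X Y s x \<in> pobj F Y"
    and "\<And>X x. X \<in> obs \<Longrightarrow> x \<in> pobj F X \<Longrightarrow> pmor F X X (idm X) x = x"
    and "\<And>X Y Z s t x. X \<in> obs \<Longrightarrow> Y \<in> obs \<Longrightarrow> Z \<in> obs \<Longrightarrow> s \<in> hom X Y \<Longrightarrow> t \<in> hom Y Z \<Longrightarrow> x \<in> pobj F X \<Longrightarrow>
        pmor F X Z (comp X t s) x = pmor F Y Z t (pmor F X Y s x)"
proof -
  note c = assms[unfolded is_functor_def]
  note c1 = conjunct1[OF c] and c2 = conjunct1[OF conjunct2[OF c]] and c3 = conjunct2[OF conjunct2[OF c]]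
  show "\<And>X Y s x. X \<in> obs \<Longrightarrow> Y \<in> obs \<Longrightarrow> s \<in> hom X Y \<Longrightarrow> x \<in> pobj F X \<Longrightarrow> pmor F X Y s x \<in> pobj F Y"
    using c1 by blast
  show "\<And>X x. X \<in> obs \<Longrightarrow> x \<in> pobj F X \<Longrightarrow> pmor F X X (idm X) x = x"
    using c2 by blast
  show "\<And>X Y Z s t x. X \<in> obs \<Longrightarrow> Y \<in> obs \<Longrightarrow> Z \<in> obs \<Longrightarrow> s \<in> hom X Y \<Longrightarrow> t \<in> hom Y Z \<Longrightarrow> x \<in> pobj F X \<Longrightarrow>
        pmor F X Z (comp X t s) x = pmor F Y Z t (pmor F X Y s x)"
    using c3 by blast
qed

lemma preserves_pullbacksD:
  assumes "preserves_pullbacks F" "is_pullback A B C D f g p q"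
  shows "set_pullback (pobj F A) (pobj F B) (pobj F C) (pobj F D)
          (pmor F B A f) (pmor F C A g) (pmor F D B p) (pmor F D C q)"
  using assms(1)[unfolded preserves_pullbacks_def, rule_format, OF assms(2)] .

lemma PfP_simps: "pobj (PfP F) X = {S. finite S \<and> S \<subseteq> pobj F X}" "pmor (PfP F) X Y s S = pmor F X Y s ` S"
  by (simp_all add: PfP_def)

lemma prodP_simps: "pobj (prodP F G) X = pobj F X \<times> pobj G X"
  "pmor (prodP F G) X Y s (x, y) = (pmor F X Y s x, pmor G X Y s y)"
  by (simp_all add: prodP_def)

lemma DeltaP_simps: "pobj (DeltaP F) X = pobj F (delta X)"
  "pmor (DeltaP F) X Y s = pmor F (delta X) (delta Y) (delta_mor X Y s)"
  by (simp_all add: DeltaP_def)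

lemma PfP_functor:
  assumes F: "is_functor F" shows "is_functor (PfP F)"
proof (rule is_functorI)
  note D = is_functorD[OF F]
  fix X Y s S assume X: "X \<in> obs" and Y: "Y \<in> obs" and s: "s \<in> hom X Y" and S: "S \<in> pobj (PfP F) X"
  then show "pmor (PfP F) X Y s S \<in> pobj (PfP F) Y" using D(1)[OF X Y s] by (auto simp: PfP_simps)
next
  note D = is_functorD[OF F]
  fix X S assume X: "X \<in> obs" and S: "S \<in> pobj (PfP F) X"
  have "pmor F X X (idm X) ` S = (\<lambda>x. x) ` S"
    by (rule image_cong) (use S D(2)[OF X] in \<open>auto simp: PfP_simps\<close>)
  then show "pmor (PfP F) X X (idm X) S = S" by (simp add: PfP_simps)
next
  note D = is_functorD[OF F]
  fix X Y Z s t S assume X: "X \<in> obs" and Y: "Y \<in> obs" and Z: "Z \<in> obs" and s: "s \<in> hom X Y"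
    and t: "t \<in> hom Y Z" and S: "S \<in> pobj (PfP F) X"
  have "pmor F X Z (comp X t s) ` S = (\<lambda>x. pmor F Y Z t (pmor F X Y s x)) ` S"
    by (rule image_cong) (use S D(3)[OF X Y Z s t] in \<open>auto simp: PfP_simps\<close>)
  then show "pmor (PfP F) X Z (comp X t s) S = pmor (PfP F) Y Z t (pmor (PfP F) X Y s S)"
    by (simp add: PfP_simps image_image)
qed

lemma PfP_pb:
  fixes F :: "('a, 'x) psh"
  assumes F: "is_functor F" and PF: "preserves_pullbacks F"
  shows "preserves_pullbacks (PfP F)"
  unfolding preserves_pullbacks_def
proof (intro allI impI)
  fix A B C D :: "(nat, 'a) lposet" and f g p q assume pb: "is_pullback A B C D f g p q"
  note P = is_pullbackD[OF pb]
  note Fd = is_functorD[OF F]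
  note sp = preserves_pullbacksD[OF PF pb]
  let ?f = "pmor F B A f" and ?g = "pmor F C A g" and ?p = "pmor F D B p" and ?q = "pmor F D C q"
  have comm: "\<And>d. d \<in> pobj F D \<Longrightarrow> ?f (?p d) = ?g (?q d)" using sp unfolding set_pullback_def by blast
  have uni: "\<And>b c. b \<in> pobj F B \<Longrightarrow> c \<in> pobj F C \<Longrightarrow> ?f b = ?g c \<Longrightarrow> \<exists>!d. d \<in> pobj F D \<and> ?p d = b \<and> ?q d = c"
    using sp unfolding set_pullback_def by blast
  have pin: "\<And>d. d \<in> pobj F D \<Longrightarrow> ?p d \<in> pobj F B" using Fd(1)[OF P(4) P(2) P(7)] .
  have qin: "\<And>d. d \<in> pobj F D \<Longrightarrow> ?q d \<in> pobj F C" using Fd(1)[OF P(4) P(3) P(8)] .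
  have injp: "inj_on ?p (pobj F D)" using pmor_inj[OF F PF P(2) P(4) P(7)] .
  have injg: "inj_on ?g (pobj F C)" using pmor_inj[OF F PF P(1) P(3) P(6)] .
  show "set_pullback (pobj (PfP F) A) (pobj (PfP F) B) (pobj (PfP F) C) (pobj (PfP F) D)
          (pmor (PfP F) B A f) (pmor (PfP F) C A g) (pmor (PfP F) D B p) (pmor (PfP F) D C q)"
    unfolding set_pullback_def
  proof (intro conjI ballI impI)
    fix S assume S: "S \<in> pobj (PfP F) D"
    have "?f ` ?p ` S = ?g ` ?q ` S" unfolding image_image
      by (rule image_cong) (use S comm in \<open>auto simp: PfP_simps\<close>)
    then show "pmor (PfP F) B A f (pmor (PfP F) D B p S) = pmor (PfP F) C A g (pmor (PfP F) D C q S)"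
      by (simp add: PfP_simps)
  next
    fix S T assume S: "S \<in> pobj (PfP F) B" and T: "T \<in> pobj (PfP F) C"
      and ST: "pmor (PfP F) B A f S = pmor (PfP F) C A g T"
    have Sf: "finite S" "S \<subseteq> pobj F B" and Tf: "finite T" "T \<subseteq> pobj F C" using S T by (auto simp: PfP_simps)
    have fST: "?f ` S = ?g ` T" using ST by (simp add: PfP_simps)
    define R where "R = {d \<in> pobj F D. ?p d \<in> S}"
    have Rsub: "R \<subseteq> pobj F D" unfolding R_def by blast
    have pR: "?p ` R = S"
    proof
      show "?p ` R \<subseteq> S" unfolding R_def by blast
      show "S \<subseteq> ?p ` R"
      proof
        fix b assume b: "b \<in> S"
        have "?f b \<in> ?g ` T" using fST b by blast
        then obtain c where c: "c \<in> T" "?f b = ?g c" by auto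
        obtain d where "d \<in> pobj F D" "?p d = b" "?q d = c" using uni[OF _ _ c(2)] b c(1) Sf Tf by blast
        then show "b \<in> ?p ` R" using b unfolding R_def by blast
      qed
    qed
    have qR: "?q ` R = T"
    proof
      show "?q ` R \<subseteq> T"
      proof
        fix c assume "c \<in> ?q ` R"
        then obtain d where d: "d \<in> R" "c = ?q d" by blast
        have dD: "d \<in> pobj F D" and pd: "?p d \<in> S" using d unfolding R_def by auto
        have "?f (?p d) \<in> ?g ` T" using fST pd by blast
        then obtain c' where c': "c' \<in> T" "?f (?p d) = ?g c'" by auto
        have "?q d = c'" using inj_onD[OF injg, of "?q d" c'] comm[OF dD] c'(2) qin[OF dD] c'(1) Tf(2) by auto
        then show "c \<in> T" using d c' by simp
      qed
      show "T \<subseteq> ?q ` R"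
      proof
        fix c assume c: "c \<in> T"
        have "?g c \<in> ?f ` S" using fST c by blast
        then obtain b where b: "b \<in> S" "?f b = ?g c" by auto
        obtain d where "d \<in> pobj F D" "?p d = b" "?q d = c" using uni[OF _ _ b(2)] b(1) c Sf Tf by blast
        then show "c \<in> ?q ` R" using b unfolding R_def by blast
      qed
    qed
    have Rfin: "finite R" using finite_imageD[of ?p R] pR Sf(1) inj_on_subset[OF injp Rsub] by simp
    show "\<exists>!R'. R' \<in> pobj (PfP F) D \<and> pmor (PfP F) D B p R' = S \<and> pmor (PfP F) D C q R' = T"
    proof (rule ex1I[of _ R])
      show "R \<in> pobj (PfP F) D \<and> pmor (PfP F) D B p R = S \<and> pmor (PfP F) D C q R = T"
        using Rfin Rsub pR qR by (simp add: PfP_simps)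
      fix R' assume R': "R' \<in> pobj (PfP F) D \<and> pmor (PfP F) D B p R' = S \<and> pmor (PfP F) D C q R' = T"
      then have "R' \<subseteq> pobj F D" "?p ` R' = ?p ` R" using pR by (auto simp: PfP_simps)
      then show "R' = R" using inj_on_image_eq_iff[OF injp _ Rsub] by blast
    qed
  qed
qed

lemma prodP_functor:
  assumes F: "is_functor F" and G: "is_functor G" shows "is_functor (prodP F G)"
proof (rule is_functorI)
  note DF = is_functorD[OF F] and DG = is_functorD[OF G]
  fix X Y s x assume "X \<in> obs" "Y \<in> obs" "s \<in> hom X Y" "x \<in> pobj (prodP F G) X"
  then show "pmor (prodP F G) X Y s x \<in> pobj (prodP F G) Y"
    using DF(1) DG(1) by (cases x) (auto simp: prodP_simps)
next
  note DF = is_functorD[OF F] and DG = is_functorD[OF G]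
  fix X x assume "X \<in> obs" "x \<in> pobj (prodP F G) X"
  then show "pmor (prodP F G) X X (idm X) x = x"
    using DF(2) DG(2) by (cases x) (auto simp: prodP_simps)
next
  note DF = is_functorD[OF F] and DG = is_functorD[OF G]
  fix X Y Z s t x assume "X \<in> obs" "Y \<in> obs" "Z \<in> obs" "s \<in> hom X Y" "t \<in> hom Y Z" "x \<in> pobj (prodP F G) X"
  then show "pmor (prodP F G) X Z (comp X t s) x = pmor (prodP F G) Y Z t (pmor (prodP F G) X Y s x)"
    using DF(3) DG(3) by (cases x) (auto simp: prodP_simps)
qed

lemma prodP_pb:
  fixes F :: "('a, 'x) psh" and G :: "('a, 'y) psh"
  assumes F: "preserves_pullbacks F" and G: "preserves_pullbacks G"
  shows "preserves_pullbacks (prodP F G)"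
  unfolding preserves_pullbacks_def
proof (intro allI impI)
  fix A B C D :: "(nat, 'a) lposet" and f g p q assume pb: "is_pullback A B C D f g p q"
  note sF = preserves_pullbacksD[OF F pb, unfolded set_pullback_def]
  note sG = preserves_pullbacksD[OF G pb, unfolded set_pullback_def]
  show "set_pullback (pobj (prodP F G) A) (pobj (prodP F G) B) (pobj (prodP F G) C) (pobj (prodP F G) D)
     (pmor (prodP F G) B A f) (pmor (prodP F G) C A g) (pmor (prodP F G) D B p) (pmor (prodP F G) D C q)"
    unfolding set_pullback_def
  proof (intro conjI ballI impI)
    fix d assume "d \<in> pobj (prodP F G) D"
    then show "pmor (prodP F G) B A f (pmor (prodP F G) D B p d) = pmor (prodP F G) C A g (pmor (prodP F G) D C q d)"
      using sF sG by (cases d) (simp add: prodP_simps)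
  next
    fix b c assume b: "b \<in> pobj (prodP F G) B" and c: "c \<in> pobj (prodP F G) C"
      and bc: "pmor (prodP F G) B A f b = pmor (prodP F G) C A g c"
    obtain b1 b2 where bb: "b = (b1, b2)" by (cases b)
    obtain c1 c2 where cc: "c = (c1, c2)" by (cases c)
    have b': "b1 \<in> pobj F B" "b2 \<in> pobj G B" using b bb by (auto simp: prodP_simps)
    have c': "c1 \<in> pobj F C" "c2 \<in> pobj G C" using c cc by (auto simp: prodP_simps)
    have e: "pmor F B A f b1 = pmor F C A g c1" "pmor G B A f b2 = pmor G C A g c2"
      using bc bb cc by (simp_all add: prodP_simps)
    obtain d1 where d1: "d1 \<in> pobj F D" "pmor F D B p d1 = b1" "pmor F D C q d1 = c1"
      and u1: "\<And>d. d \<in> pobj F D \<and> pmor F D B p d = b1 \<and> pmor F D C q d = c1 \<Longrightarrow> d = d1"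
    proof -
      have "\<exists>!d. d \<in> pobj F D \<and> pmor F D B p d = b1 \<and> pmor F D C q d = c1"
        using sF b'(1) c'(1) e(1) by blast
      then show ?thesis using that by blast
    qed
    obtain d2 where d2: "d2 \<in> pobj G D" "pmor G D B p d2 = b2" "pmor G D C q d2 = c2"
      and u2: "\<And>d. d \<in> pobj G D \<and> pmor G D B p d = b2 \<and> pmor G D C q d = c2 \<Longrightarrow> d = d2"
    proof -
      have "\<exists>!d. d \<in> pobj G D \<and> pmor G D B p d = b2 \<and> pmor G D C q d = c2"
        using sG b'(2) c'(2) e(2) by blast
      then show ?thesis using that by blast
    qed
    show "\<exists>!d. d \<in> pobj (prodP F G) D \<and> pmor (prodP F G) D B p d = b \<and> pmor (prodP F G) D C q d = c"
    proof (rule ex1I[of _ "(d1, d2)"])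
      show "(d1, d2) \<in> pobj (prodP F G) D \<and> pmor (prodP F G) D B p (d1, d2) = b \<and> pmor (prodP F G) D C q (d1, d2) = c"
        using d1 d2 bb cc by (simp add: prodP_simps)
      fix d assume d: "d \<in> pobj (prodP F G) D \<and> pmor (prodP F G) D B p d = b \<and> pmor (prodP F G) D C q d = c"
      obtain x1 x2 where dd: "d = (x1, x2)" by (cases d)
      have "x1 = d1" using u1[of x1] d dd bb cc by (simp add: prodP_simps)
      moreover have "x2 = d2" using u2[of x2] d dd bb cc by (simp add: prodP_simps)
      ultimately show "d = (d1, d2)" using dd by simp
    qed
  qed
qed

lemma ActP_functor: "is_functor ActP"
  by (rule is_functorI) (simp_all add: ActP_def)

lemma ActP_pb: "preserves_pullbacks ActP"
  unfolding preserves_pullbacks_def set_pullback_def by (simp add: ActP_def)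

lemma EP_simps: "pobj EP X = {(x, llab X x) | x. x \<in> lcarrier X}" "pmor EP X Y s (x, l) = (s x, l)"
  by (simp_all add: EP_def)

lemma EP_functor: "is_functor (EP :: ('a, nat \<times> 'a) psh)"
proof (rule is_functorI)
  fix X Y :: "(nat, 'a) lposet" and s z assume X: "X \<in> obs" and Y: "Y \<in> obs" and s: "s \<in> hom X Y" and z: "z \<in> pobj EP X"
  then obtain x where x: "z = (x, llab X x)" "x \<in> lcarrier X" by (auto simp: EP_simps)
  have "s x \<in> lcarrier Y" "llab Y (s x) = llab X x"
    using hom_in[OF s x(2)] order_embD(2)[OF homD(1)[OF s] x(2)] by simp_all
  then show "pmor EP X Y s z \<in> pobj EP Y" using x by (auto simp: EP_simps)
next
  fix X :: "(nat, 'a) lposet" and z assume "X \<in> obs" "z \<in> pobj EP X"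
  then show "pmor EP X X (idm X) z = z" by (auto simp: EP_simps idm_def)
next
  fix X Y Z :: "(nat, 'a) lposet" and s t z assume "X \<in> obs" "Y \<in> obs" "Z \<in> obs" "s \<in> hom X Y" "t \<in> hom Y Z" "z \<in> pobj EP X"
  then show "pmor EP X Z (comp X t s) z = pmor EP Y Z t (pmor EP X Y s z)"
    by (auto simp: EP_simps comp_apply')
qed

lemma EP_pb: "preserves_pullbacks (EP :: ('a, nat \<times> 'a) psh)"
  unfolding preserves_pullbacks_def
proof (intro allI impI)
  fix A B C D :: "(nat, 'a) lposet" and f g p q assume pb: "is_pullback A B C D f g p q"
  note P = is_pullbackD[OF pb]
  have injp: "inj_on p (lcarrier D)" using order_emb_inj[OF obsD[OF P(4)] homD(1)[OF P(7)]] .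
  show "set_pullback (pobj EP A) (pobj EP B) (pobj EP C) (pobj EP D)
          (pmor EP B A f) (pmor EP C A g) (pmor EP D B p) (pmor EP D C q)"
    unfolding set_pullback_def
  proof (intro conjI ballI impI)
    fix z assume "z \<in> pobj EP D"
    then obtain d where d: "z = (d, llab D d)" "d \<in> lcarrier D" by (auto simp: EP_simps)
    then show "pmor EP B A f (pmor EP D B p z) = pmor EP C A g (pmor EP D C q z)"
      using pb_comm[OF pb d(2)] by (simp add: EP_simps)
  next
    fix y z assume y: "y \<in> pobj EP B" and z: "z \<in> pobj EP C" and yz: "pmor EP B A f y = pmor EP C A g z"
    obtain b where b: "y = (b, llab B b)" "b \<in> lcarrier B" using y by (auto simp: EP_simps)
    obtain c where c: "z = (c, llab C c)" "c \<in> lcarrier C" using z by (auto simp: EP_simps)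
    have fg: "f b = g c" and lab: "llab B b = llab C c" using yz b c by (simp_all add: EP_simps)
    obtain d where d: "d \<in> lcarrier D" "p d = b" "q d = c" using pb_cover[OF pb b(2) c(2) fg] by blast
    have ld: "llab D d = llab B b" using order_embD(2)[OF homD(1)[OF P(7)] d(1)] d(2) by simp
    show "\<exists>!w. w \<in> pobj EP D \<and> pmor EP D B p w = y \<and> pmor EP D C q w = z"
    proof (rule ex1I[of _ "(d, llab D d)"])
      show "(d, llab D d) \<in> pobj EP D \<and> pmor EP D B p (d, llab D d) = y \<and> pmor EP D C q (d, llab D d) = z"
        using d ld lab b c by (auto simp: EP_simps)
      fix w assume w: "w \<in> pobj EP D \<and> pmor EP D B p w = y \<and> pmor EP D C q w = z"
      then obtain d' where d': "w = (d', llab D d')" "d' \<in> lcarrier D" by (auto simp: EP_simps)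
      have "p d' = p d" using w d' b d(2) by (simp add: EP_simps)
      then have "d' = d" using inj_onD[OF injp _ d'(2) d(1)] by simp
      then show "w = (d, llab D d)" using d' by simp
    qed
  qed
qed

lemma DeltaP_functor:
  assumes F: "is_functor (F :: ('a::finite, 'x) psh)" shows "is_functor (DeltaP F)"
proof (rule is_functorI)
  note D = is_functorD[OF F]
  fix X Y s x assume X: "(X :: (nat,'a) lposet) \<in> obs" and Y: "Y \<in> obs" and s: "s \<in> hom X Y" and x: "x \<in> pobj (DeltaP F) X"
  then show "pmor (DeltaP F) X Y s x \<in> pobj (DeltaP F) Y"
    using D(1)[OF delta_obs[OF X] delta_obs[OF Y] delta_mor_hom[OF X Y s]] by (simp add: DeltaP_simps)
next
  note D = is_functorD[OF F]
  fix X x assume X: "(X :: (nat,'a) lposet) \<in> obs" and x: "x \<in> pobj (DeltaP F) X"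
  then show "pmor (DeltaP F) X X (idm X) x = x"
    using D(2)[OF delta_obs[OF X]] by (simp add: DeltaP_simps delta_mor_id[OF X])
next
  note D = is_functorD[OF F]
  fix X Y Z s t x assume X: "(X :: (nat,'a) lposet) \<in> obs" and Y: "Y \<in> obs" and Z: "Z \<in> obs"
    and s: "s \<in> hom X Y" and t: "t \<in> hom Y Z" and x: "x \<in> pobj (DeltaP F) X"
  then show "pmor (DeltaP F) X Z (comp X t s) x = pmor (DeltaP F) Y Z t (pmor (DeltaP F) X Y s x)"
    using D(3)[OF delta_obs[OF X] delta_obs[OF Y] delta_obs[OF Z] delta_mor_hom[OF X Y s] delta_mor_hom[OF Y Z t]]
    by (simp add: DeltaP_simps delta_mor_comp[OF X Y Z s])
qed

lemma DeltaP_pb: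
  assumes PF: "preserves_pullbacks (F :: ('a::finite, 'x) psh)" shows "preserves_pullbacks (DeltaP F)"
  unfolding preserves_pullbacks_def DeltaP_simps
  using preserves_pullbacksD[OF PF delta_pullback] by blast

theorem proposition10:
  fixes P :: "('a::finite, 'x) psh"
  assumes "is_functor P" and "preserves_pullbacks P"
  shows "is_functor (PfP P) \<and> preserves_pullbacks (PfP P) \<and>
         is_functor (DeltaP P) \<and> preserves_pullbacks (DeltaP P) \<and>
         is_functor (BP P) \<and> preserves_pullbacks (BP P)"
proof -
  have LF: "is_functor (LP :: ('a, 'a \<times> (nat \<times> 'a) set) psh)"
    unfolding LP_def by (rule prodP_functor[OF ActP_functor PfP_functor[OF EP_functor]])
  have LB: "preserves_pullbacks (LP :: ('a, 'a \<times> (nat \<times> 'a) set) psh)"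
    unfolding LP_def by (rule prodP_pb[OF ActP_pb PfP_pb[OF EP_functor EP_pb]])
  have DF: "is_functor (DeltaP P)" using DeltaP_functor[OF assms(1)] .
  have DB: "preserves_pullbacks (DeltaP P)" using DeltaP_pb[OF assms(2)] .
  have PF: "is_functor (prodP LP (DeltaP P))" using prodP_functor[OF LF DF] .
  have PB: "preserves_pullbacks (prodP LP (DeltaP P))" using prodP_pb[OF LB DB] .
  show ?thesis unfolding BP_def
    using PfP_functor[OF assms(1)] PfP_pb[OF assms] DF DB PfP_functor[OF PF] PfP_pb[OF PF PB] by blast
qed

end
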